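(* Let $(A,\cdot,\alpha_A)$ and $(B,\circ,\alpha_B)$ be nearly Hom-associative algebras over a field $\mathbb{K}$ of characteristic $0$. Suppose there are linear maps $l_A,r_A:A\to\mathrm{End}(B)$ and $l_B,r_B:B\to\mathrm{End}(A)$ such that $(l_A,r_A,B,\alpha_B)$ is a bimodule of $(A,\cdot,\alpha_A)$, $(l_B,r_B,A,\alpha_A)$ is a bimodule of $(B,\circ,\alpha_B)$, and for all $x,y\in A$, $a,b\in B$: \begin{align*} &\alpha_A(x)\cdot(r_B(a)y)+r_B(l_A(y)a)\alpha_A(x)-(l_B(a)x)\cdot\alpha_A(y)-l_B(r_A(x)a)\alpha_A(y)=0,\\ &\alpha_A(x)\cdot(l_B(a)y)+r_B(r_A(y)a)\alpha_A(x)-r_B(\alpha_B(a))(y\cdot x)=0,\\ &l_B(\alpha_B(a))(x\cdot y)-(r_B(a)y)\cdot\alpha_A(x)-l_B(l_A(y)a)\alpha_A(x)=0,\\ &\alpha_B(a)\circ(r_A(x)b)+r_A(l_B(b)x)\alpha_B(a)-(l_A(x)a)\circ\alpha_B(b)-l_A(r_B(a)x)\alpha_B(b)=0,\\ &\alpha_B(a)\circ(l_A(x)b)+r_A(r_B(b)x)\alpha_B(a)-r_A(\alpha_A(x))(b\circ a)=0,\\ &l_A(\alpha_A(x))(b\circ a)-(r_A(x)a)\circ\alpha_B(b)-l_A(l_B(a)x)\alpha_B(b)=0. \end{align*} Then, with the product $(x+a)\ast(y+b)=(x\cdot y+l_B(a)y+r_B(b)x)+(a\circ b+l_A(x)b+r_A(y)a)$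 on $A\oplus B$, the triple $(A\oplus B,\ast,\alpha_A\oplus\alpha_B)$ is a nearly Hom-associative algebra.
   Context: A nearly Hom-associative algebra is a triple $(A,\cdot,\alpha)$ with bilinear product $\cdot$ and linear $\alpha:A\to A$ such that $\alpha(x)\cdot(y\cdot z)=(z\cdot x)\cdot\alpha(y)$ for all $x,y,z$. A bimodule of $(A,\cdot,\alpha)$ is a quadruple $(l,r,V,\varphi)$ with $V$ a linear space, $l,r:A\to\mathrm{End}(V)$ linear and $\varphi\in\mathrm{End}(V)$ such that for all $x,y\in A$: $\varphi\circ l(x)=l(\alpha(x))\circ\varphi$, $\varphi\circ r(x)=r(\alpha(x))\circ\varphi$, $l(\alpha(x))\circ l(y)=r(\alpha(y))\circ r(x)$, $l(\alpha(x))\circ r(y)=l(y\cdot x)\circ\varphi$, $r(\alpha(x))\circ l(y)=r(x\cdot y)\circ\varphi$. $(\alpha_A\oplus\alpha_B)(x+a)=\alpha_A(x)+\alpha_B(a)$. *)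

theory Defs
  imports Complex_Main "HOL-Library.Product_Plus"
begin

definition nearly_hom_assoc ::
  "('k::field \<Rightarrow> 'a::ab_group_add \<Rightarrow> 'a) \<Rightarrow> ('a \<Rightarrow> 'a \<Rightarrow> 'a) \<Rightarrow> ('a \<Rightarrow> 'a) \<Rightarrow> bool" where
  "nearly_hom_assoc s mult alpha \<longleftrightarrow>
     vector_space s \<and>
     (\<forall>x. Vector_Spaces.linear s s (mult x)) \<and>
     (\<forall>y. Vector_Spaces.linear s s (\<lambda>x. mult x y)) \<and>
     Vector_Spaces.linear s s alpha \<and>
     (\<forall>x y z. mult (alpha x) (mult y z) = mult (mult z x) (alpha y))"

definition bimodule ::
  "('k::field \<Rightarrow> 'a::ab_group_add \<Rightarrow> 'a) \<Rightarrow> ('a \<Rightarrow> 'a \<Rightarrow> 'a) \<Rightarrow> ('a \<Rightarrow> 'a) \<Rightarrow>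
   ('k \<Rightarrow> 'v::ab_group_add \<Rightarrow> 'v) \<Rightarrow> ('a \<Rightarrow> 'v \<Rightarrow> 'v) \<Rightarrow> ('a \<Rightarrow> 'v \<Rightarrow> 'v) \<Rightarrow> ('v \<Rightarrow> 'v) \<Rightarrow> bool" where
  "bimodule sA mult alpha sV l r phi \<longleftrightarrow>
     vector_space sV \<and>
     (\<forall>x. Vector_Spaces.linear sV sV (l x)) \<and>
     (\<forall>v. Vector_Spaces.linear sA sV (\<lambda>x. l x v)) \<and>
     (\<forall>x. Vector_Spaces.linear sV sV (r x)) \<and>
     (\<forall>v. Vector_Spaces.linear sA sV (\<lambda>x. r x v)) \<and>
     Vector_Spaces.linear sV sV phi \<and>
     (\<forall>x y.
        phi \<circ> l x = l (alpha x) \<circ> phi \<and>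
        phi \<circ> r x = r (alpha x) \<circ> phi \<and>
        l (alpha x) \<circ> l y = r (alpha y) \<circ> r x \<and>
        l (alpha x) \<circ> r y = l (mult y x) \<circ> phi \<and>
        r (alpha x) \<circ> l y = r (mult x y) \<circ> phi)"

definition sum_scale :: "('k \<Rightarrow> 'a \<Rightarrow> 'a) \<Rightarrow> ('k \<Rightarrow> 'b \<Rightarrow> 'b) \<Rightarrow> 'k \<Rightarrow> 'a \<times> 'b \<Rightarrow> 'a \<times> 'b" where
  "sum_scale sA sB c p = (sA c (fst p), sB c (snd p))"

definition sum_map :: "('a \<Rightarrow> 'a) \<Rightarrow> ('b \<Rightarrow> 'b) \<Rightarrow> 'a \<times> 'b \<Rightarrow> 'a \<times> 'b" where
  "sum_map f g p = (f (fst p), g (snd p))"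

definition matched_prod ::
  "('a::ab_group_add \<Rightarrow> 'a \<Rightarrow> 'a) \<Rightarrow> ('b::ab_group_add \<Rightarrow> 'b \<Rightarrow> 'b) \<Rightarrow>
   ('a \<Rightarrow> 'b \<Rightarrow> 'b) \<Rightarrow> ('a \<Rightarrow> 'b \<Rightarrow> 'b) \<Rightarrow> ('b \<Rightarrow> 'a \<Rightarrow> 'a) \<Rightarrow> ('b \<Rightarrow> 'a \<Rightarrow> 'a) \<Rightarrow>
   'a \<times> 'b \<Rightarrow> 'a \<times> 'b \<Rightarrow> 'a \<times> 'b" where
  "matched_prod multA multB lA rA lB rB p q =
     (let x = fst p; a = snd p; y = fst q; b = snd q in
      (multA x y + lB a y + rB b x, multB a b + lA x b + rA y a))"

end

theory Submission
  imports Defs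
begin

lemma lin_iff:
  "Vector_Spaces.linear s1 s2 f \<longleftrightarrow> vector_space s1 \<and> vector_space s2 \<and>
     (\<forall>x y. f (x + y) = f x + f y) \<and> (\<forall>c x. f (s1 c x) = s2 c (f x))"
  unfolding Vector_Spaces.linear_def module_hom_def module_hom_axioms_def module_iff_vector_space by auto

lemma vs_prod:
  assumes "vector_space sA" "vector_space sB"
  shows "vector_space (sum_scale sA sB)"
  using assms unfolding vector_space_def sum_scale_def by auto

theorem mainTheorem13:
  fixes sA :: "'k::field_char_0 \<Rightarrow> 'a::ab_group_add \<Rightarrow> 'a"
    and sB :: "'k \<Rightarrow> 'b::ab_group_add \<Rightarrow> 'b"
    and multA :: "'a \<Rightarrow> 'a \<Rightarrow> 'a" and alphaA :: "'a \<Rightarrow> 'a"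
    and multB :: "'b \<Rightarrow> 'b \<Rightarrow> 'b" and alphaB :: "'b \<Rightarrow> 'b"
    and lA rA :: "'a \<Rightarrow> 'b \<Rightarrow> 'b" and lB rB :: "'b \<Rightarrow> 'a \<Rightarrow> 'a"
  assumes hA: "nearly_hom_assoc sA multA alphaA"
    and hB: "nearly_hom_assoc sB multB alphaB"
    and bA: "bimodule sA multA alphaA sB lA rA alphaB"
    and bB: "bimodule sB multB alphaB sA lB rB alphaA"
    and c1: "\<And>x y a. multA (alphaA x) (rB a y) + rB (lA y a) (alphaA x)
                - multA (lB a x) (alphaA y) - lB (rA x a) (alphaA y) = 0"
    and c2: "\<And>x y a. multA (alphaA x) (lB a y) + rB (rA y a) (alphaA x)
                - rB (alphaB a) (multA y x) = 0"
    and c3: "\<And>x y a. lB (alphaB a) (multA x y) - multA (rB a y) (alphaA x)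
                - lB (lA y a) (alphaA x) = 0"
    and c4: "\<And>x a b. multB (alphaB a) (rA x b) + rA (lB b x) (alphaB a)
                - multB (lA x a) (alphaB b) - lA (rB a x) (alphaB b) = 0"
    and c5: "\<And>x a b. multB (alphaB a) (lA x b) + rA (rB b x) (alphaB a)
                - rA (alphaA x) (multB b a) = 0"
    and c6: "\<And>x a b. lA (alphaA x) (multB b a) - multB (rA x a) (alphaB b)
                - lA (lB a x) (alphaB b) = 0"
  shows "nearly_hom_assoc (sum_scale sA sB) (matched_prod multA multB lA rA lB rB)
           (sum_map alphaA alphaB)"
proof -
  note hA' = hA[unfolded nearly_hom_assoc_def lin_iff]
  note hB' = hB[unfolded nearly_hom_assoc_def lin_iff]
  note bA' = bA[unfolded bimodule_def lin_iff fun_eq_iff comp_def]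
  note bB' = bB[unfolded bimodule_def lin_iff fun_eq_iff comp_def]
  have vA: "vector_space sA" and vB: "vector_space sB" using hA' hB' by auto
  have vP: "vector_space (sum_scale sA sB)" using vA vB by (rule vs_prod)
  have mA1: "\<And>x y z. multA x (y + z) = multA x y + multA x z"
   and mA2: "\<And>x y z. multA (y + z) x = multA y x + multA z x"
   and mA3: "\<And>x c y. multA x (sA c y) = sA c (multA x y)"
   and mA4: "\<And>x c y. multA (sA c y) x = sA c (multA y x)"
   and aA1: "\<And>x y. alphaA (x + y) = alphaA x + alphaA y"
   and aA2: "\<And>c x. alphaA (sA c x) = sA c (alphaA x)"
   and asA: "\<And>x y z. multA (alphaA x) (multA y z) = multA (multA z x) (alphaA y)"
    using hA' by auto
  have mB1: "\<And>x y z. multB x (y + z) = multB x y + multB x z"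
   and mB2: "\<And>x y z. multB (y + z) x = multB y x + multB z x"
   and mB3: "\<And>x c y. multB x (sB c y) = sB c (multB x y)"
   and mB4: "\<And>x c y. multB (sB c y) x = sB c (multB y x)"
   and aB1: "\<And>x y. alphaB (x + y) = alphaB x + alphaB y"
   and aB2: "\<And>c x. alphaB (sB c x) = sB c (alphaB x)"
   and asB: "\<And>x y z. multB (alphaB x) (multB y z) = multB (multB z x) (alphaB y)"
    using hB' by auto
  have lA1: "\<And>x u v. lA x (u + v) = lA x u + lA x v"
   and lA2: "\<And>x y v. lA (x + y) v = lA x v + lA y v"
   and lA3: "\<And>x c v. lA x (sB c v) = sB c (lA x v)"
   and lA4: "\<And>x c v. lA (sA c x) v = sB c (lA x v)"
   and rA1: "\<And>x u v. rA x (u + v) = rA x u + rA x v"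
   and rA2: "\<And>x y v. rA (x + y) v = rA x v + rA y v"
   and rA3: "\<And>x c v. rA x (sB c v) = sB c (rA x v)"
   and rA4: "\<And>x c v. rA (sA c x) v = sB c (rA x v)"
   and bA1: "\<And>x y v. lA (alphaA x) (lA y v) = rA (alphaA y) (rA x v)"
   and bA2: "\<And>x y v. lA (alphaA x) (rA y v) = lA (multA y x) (alphaB v)"
   and bA3: "\<And>x y v. rA (alphaA x) (lA y v) = rA (multA x y) (alphaB v)"
    using bA' by auto
  have lB1: "\<And>x u v. lB x (u + v) = lB x u + lB x v"
   and lB2: "\<And>x y v. lB (x + y) v = lB x v + lB y v"
   and lB3: "\<And>x c v. lB x (sA c v) = sA c (lB x v)"
   and lB4: "\<And>x c v. lB (sB c x) v = sA c (lB x v)"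
   and rB1: "\<And>x u v. rB x (u + v) = rB x u + rB x v"
   and rB2: "\<And>x y v. rB (x + y) v = rB x v + rB y v"
   and rB3: "\<And>x c v. rB x (sA c v) = sA c (rB x v)"
   and rB4: "\<And>x c v. rB (sB c x) v = sA c (rB x v)"
   and bB1: "\<And>x y v. lB (alphaB x) (lB y v) = rB (alphaB y) (rB x v)"
   and bB2: "\<And>x y v. lB (alphaB x) (rB y v) = lB (multB y x) (alphaA v)"
   and bB3: "\<And>x y v. rB (alphaB x) (lB y v) = rB (multB x y) (alphaA v)"
    using bB' by auto
  note add_rules = mA1 mA2 mB1 mB2 lA1 lA2 rA1 rA2 lB1 lB2 rB1 rB2 aA1 aB1
  note scale_rules = mA3 mA4 mB3 mB4 lA3 lA4 rA3 rA4 lB3 lB4 rB3 rB4 aA2 aB2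
  interpret vsA: vector_space sA by (rule vA)
  interpret vsB: vector_space sB by (rule vB)
  have lin1: "\<And>p. Vector_Spaces.linear (sum_scale sA sB) (sum_scale sA sB)
                 (matched_prod multA multB lA rA lB rB p)"
    unfolding lin_iff using vP
    by (auto simp: matched_prod_def sum_scale_def Let_def add_rules scale_rules
        vsA.scale_right_distrib vsB.scale_right_distrib algebra_simps)
  have lin2: "\<And>q. Vector_Spaces.linear (sum_scale sA sB) (sum_scale sA sB)
                 (\<lambda>p. matched_prod multA multB lA rA lB rB p q)"
    unfolding lin_iff using vP
    by (auto simp: matched_prod_def sum_scale_def Let_def add_rules scale_rules
        vsA.scale_right_distrib vsB.scale_right_distrib algebra_simps)
  have lin3: "Vector_Spaces.linear (sum_scale sA sB) (sum_scale sA sB) (sum_map alphaA alphaB)"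
    unfolding lin_iff using vP
    by (auto simp: sum_map_def sum_scale_def aA1 aB1 aA2 aB2)
  have e1: "\<And>x y a. multA (alphaA x) (rB a y) = multA (lB a x) (alphaA y) + lB (rA x a) (alphaA y) - rB (lA y a) (alphaA x)"
    using c1 by (simp add: algebra_simps)
  have e2: "\<And>x y a. multA (alphaA x) (lB a y) = rB (alphaB a) (multA y x) - rB (rA y a) (alphaA x)"
    using c2 by (simp add: algebra_simps)
  have e3: "\<And>x y a. lB (alphaB a) (multA x y) = multA (rB a y) (alphaA x) + lB (lA y a) (alphaA x)"
    using c3 by (simp add: algebra_simps)
  have e4: "\<And>x a b. multB (alphaB a) (rA x b) = multB (lA x a) (alphaB b) + lA (rB a x) (alphaB b) - rA (lB b x) (alphaB a)"
    using c4 by (simp add: algebra_simps)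
  have e5: "\<And>x a b. multB (alphaB a) (lA x b) = rA (alphaA x) (multB b a) - rA (rB b x) (alphaB a)"
    using c5 by (simp add: algebra_simps)
  have e6: "\<And>x a b. lA (alphaA x) (multB b a) = multB (rA x a) (alphaB b) + lA (lB a x) (alphaB b)"
    using c6 by (simp add: algebra_simps)
  have id: "\<And>X Y Z. matched_prod multA multB lA rA lB rB (sum_map alphaA alphaB X)
         (matched_prod multA multB lA rA lB rB Y Z) =
       matched_prod multA multB lA rA lB rB (matched_prod multA multB lA rA lB rB Z X)
         (sum_map alphaA alphaB Y)"
    by (simp add: matched_prod_def sum_map_def Let_def add_rules e1 e2 e3 e4 e5 e6
        asA asB bA1 bA2 bA3 bB1 bB2 bB3 algebra_simps)
  show ?thesis unfolding nearly_hom_assoc_def using vP lin1 lin2 lin3 id by blast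
qed

end
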